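(* Let $N\ge1$, constants $\kappa,\epsilon,\sigma_B,\sigma_E,G,\Upsilon>0$, and $p_{1,B}\ge p_{2,B}\ge\dots\ge p_{N,B}>0$ (sorted in descending order). Consider the binary program $$\max_{\boldsymbol a\in\{0,1\}^N}\ \sum_{n=1}^N a_np_{n,B}\quad\text{s.t.}\quad \frac{2\kappa a_np_{n,B}}{\sqrt{\sigma_B}}\le\epsilon\ \ \forall n,\qquad \frac{G\sqrt{\sigma_E}}{\big(\sum_{n=1}^N a_n\big)\max_n\{a_np_{n,B}\}}\ge\sqrt{\Upsilon}.$$ Assume $p_{i,B}$ is the largest entry of $(p_{1,B},\dots,p_{N,B})$ satisfying $\frac{2\kappa p_{i,B}}{\sqrt{\sigma_B}}\le\epsilon$. For $1\le x\le N-i+1$ let $K_x=\min\big\{N-i-x+2,\ \big\lfloor\frac{G\sqrt{\sigma_E}}{p_{i+x-1,B}\sqrt{\Upsilon}}\big\rfloor\big\}$ and define $\boldsymbol a^x\in\{0,1\}^N$ by $[\boldsymbol a^x]_n=1$ if $i+x-1\le n\le i+x+K_x-2$ and $[\boldsymbol a^x]_n=0$ otherwise. Then the only candidates for a globally optimal solution of the program are the $N-i+1$ vectors $\boldsymbol a^1,\dots,\boldsymbol a^{N-i+1}$.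
   Context: This program arises in the paper as the high-model-dimension ($d\to\infty$) limit of a device-selection problem: $a_n=1$ means device $n$ uploads its gradient, $a_n=0$ means it acts as a jammer; $p_{n,B}$ is channel gain times square root of power budget, $\kappa=\sqrt{2\ln(1.25/\zeta)}$ is a privacy constant, $\epsilon$ a differential-privacy level, $\Upsilon$ a security requirement, $\sigma_B,\sigma_E$ noise variances at the server and eavesdropper, and $G$ a gradient-norm bound. *)

theory Defs
  imports Complex_Main
begin

text \<open>Vectors a in {0,1}^N are functions nat => real, only indices 1..N matter.\<close>

definition objective :: "nat \<Rightarrow> (nat \<Rightarrow> real) \<Rightarrow> (nat \<Rightarrow> real) \<Rightarrow> real" where
  "objective N p a = (\<Sum>n=1..N. a n * p n)"

text \<open>Security constraint G sqrt(sigma_E) / ((sum a) * max(a p)) >= sqrt Upsilon;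
  when the denominator is 0 (a = 0) the ratio is +infinity and the constraint holds.\<close>
definition feasible ::
  "nat \<Rightarrow> (nat \<Rightarrow> real) \<Rightarrow> real \<Rightarrow> real \<Rightarrow> real \<Rightarrow> real \<Rightarrow> real \<Rightarrow> real \<Rightarrow> (nat \<Rightarrow> real) \<Rightarrow> bool" where
  "feasible N p \<kappa> \<epsilon> \<sigma>B \<sigma>E G \<Upsilon> a \<longleftrightarrow>
     (\<forall>n\<in>{1..N}. a n \<in> {0, 1}) \<and>
     (\<forall>n\<in>{1..N}. 2 * \<kappa> * a n * p n / sqrt \<sigma>B \<le> \<epsilon>) \<and>
     (let D = (\<Sum>n=1..N. a n) * Max ((\<lambda>n. a n * p n) ` {1..N})
      in D = 0 \<or> G * sqrt \<sigma>E / D \<ge> sqrt \<Upsilon>)"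

definition optimal ::
  "nat \<Rightarrow> (nat \<Rightarrow> real) \<Rightarrow> real \<Rightarrow> real \<Rightarrow> real \<Rightarrow> real \<Rightarrow> real \<Rightarrow> real \<Rightarrow> (nat \<Rightarrow> real) \<Rightarrow> bool" where
  "optimal N p \<kappa> \<epsilon> \<sigma>B \<sigma>E G \<Upsilon> a \<longleftrightarrow>
     feasible N p \<kappa> \<epsilon> \<sigma>B \<sigma>E G \<Upsilon> a \<and>
     (\<forall>b. feasible N p \<kappa> \<epsilon> \<sigma>B \<sigma>E G \<Upsilon> b \<longrightarrow> objective N p b \<le> objective N p a)"

definition Kx :: "nat \<Rightarrow> (nat \<Rightarrow> real) \<Rightarrow> real \<Rightarrow> real \<Rightarrow> real \<Rightarrow> nat \<Rightarrow> nat \<Rightarrow> int" where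
  "Kx N p \<sigma>E G \<Upsilon> i x =
     min (int N - int i - int x + 2) \<lfloor>G * sqrt \<sigma>E / (p (i + x - 1) * sqrt \<Upsilon>)\<rfloor>"

definition ax :: "nat \<Rightarrow> (nat \<Rightarrow> real) \<Rightarrow> real \<Rightarrow> real \<Rightarrow> real \<Rightarrow> nat \<Rightarrow> nat \<Rightarrow> (nat \<Rightarrow> real)" where
  "ax N p \<sigma>E G \<Upsilon> i x = (\<lambda>n.
     if int i + int x - 1 \<le> int n \<and> int n \<le> int i + int x + Kx N p \<sigma>E G \<Upsilon> i x - 2 then 1 else 0)"

end

theory Submission
  imports Defs
begin

lemma sum_le_prefix:
  fixes p :: "nat \<Rightarrow> real"
  assumes anti: "\<And>a b. m \<le> a \<Longrightarrow> a \<le> b \<Longrightarrow> b \<le> N \<Longrightarrow> p b \<le> p a"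
  shows "finite S \<Longrightarrow> S \<subseteq> {m..N} \<Longrightarrow> sum p S \<le> sum p {m..<m + card S}"
proof (induction "card S" arbitrary: S)
  case 0
  then show ?case by simp
next
  case (Suc k)
  then have ne: "S \<noteq> {}" by auto
  define t where "t = Max S"
  have tS: "t \<in> S" using Suc.prems ne t_def Max_in by auto
  have ck: "card (S - {t}) = k" using Suc.hyps(2) tS Suc.prems by simp
  have IH: "sum p (S - {t}) \<le> sum p {m..<m + k}"
    using Suc.hyps(1)[of "S - {t}"] ck Suc.prems by auto
  have sub: "S \<subseteq> {m..t}" using Suc.prems t_def by (auto intro: Max_ge)
  have "Suc k \<le> card {m..t}" using card_mono[OF _ sub] Suc.hyps(2) by simp
  then have tge: "m + k \<le> t" by simp
  have tN: "t \<le> N" using tS Suc.prems by auto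
  have pt: "p t \<le> p (m + k)" using anti[of "m+k" t] tge tN by simp
  have "sum p S = p t + sum p (S - {t})" using sum.remove[OF Suc.prems(1) tS] .
  also have "\<dots> \<le> p (m + k) + sum p {m..<m + k}" using pt IH by simp
  also have "\<dots> = sum p {m..<m + card S}" using Suc.hyps(2)[symmetric] by simp
  finally show ?case .
qed

lemma supp_facts:
  fixes p a :: "nat \<Rightarrow> real"
  assumes bin: "\<forall>n\<in>{1..N}. a n \<in> {0, 1}"
    and sorted: "\<And>m n. 1 \<le> m \<Longrightarrow> m \<le> n \<Longrightarrow> n \<le> N \<Longrightarrow> p n \<le> p m"
    and pos: "\<And>n. n \<in> {1..N} \<Longrightarrow> p n > 0"
    and S: "S = {n\<in>{1..N}. a n = 1}"
  shows "(\<Sum>n=1..N. a n) = real (card S)"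
    and "objective N p a = sum p S"
    and "S \<noteq> {} \<Longrightarrow> Max ((\<lambda>n. a n * p n) ` {1..N}) = p (Min S)"
proof -
  have e1: "\<And>n. n \<in> {1..N} \<Longrightarrow> a n = (if n \<in> S then 1 else 0)" using bin S by auto
  have "(\<Sum>n=1..N. a n) = (\<Sum>n=1..N. (if n \<in> S then 1 else 0))"
    using e1 by (intro sum.cong) auto
  also have "\<dots> = real (card ({1..N} \<inter> S))" by (simp add: sum.inter_restrict[symmetric])
  also have "{1..N} \<inter> S = S" using S by auto
  finally show "(\<Sum>n=1..N. a n) = real (card S)" .
  have "objective N p a = (\<Sum>n=1..N. (if n \<in> S then p n else 0))"
    unfolding objective_def using e1 by (intro sum.cong) auto
  also have "\<dots> = sum p ({1..N} \<inter> S)" by (simp add: sum.inter_restrict)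
  also have "{1..N} \<inter> S = S" using S by auto
  finally show "objective N p a = sum p S" .
  assume ne: "S \<noteq> {}"
  have fin: "finite S" using S by auto
  have mS: "Min S \<in> S" using Min_in[OF fin ne] .
  show "Max ((\<lambda>n. a n * p n) ` {1..N}) = p (Min S)"
  proof (rule Max_eqI)
    show "finite ((\<lambda>n. a n * p n) ` {1..N})" by simp
    show "p (Min S) \<in> (\<lambda>n. a n * p n) ` {1..N}"
      using mS S by (intro image_eqI[of _ _ "Min S"]) auto
    fix y assume "y \<in> (\<lambda>n. a n * p n) ` {1..N}"
    then obtain n where n: "n \<in> {1..N}" "y = a n * p n" by auto
    show "y \<le> p (Min S)"
    proof (cases "n \<in> S")
      case True
      then have "Min S \<le> n" using fin by simp
      then show ?thesis using sorted[of "Min S" n] n e1 True mS S by auto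
    next
      case False
      then show ?thesis using n e1 pos[of "Min S"] mS S by auto
    qed
  qed
qed

theorem lemma6:
  fixes N i :: nat and p :: "nat \<Rightarrow> real" and \<kappa> \<epsilon> \<sigma>B \<sigma>E G \<Upsilon> :: real
  assumes "N \<ge> 1"
    and "\<kappa> > 0" "\<epsilon> > 0" "\<sigma>B > 0" "\<sigma>E > 0" "G > 0" "\<Upsilon> > 0"
    and sorted: "\<And>m n. 1 \<le> m \<Longrightarrow> m \<le> n \<Longrightarrow> n \<le> N \<Longrightarrow> p n \<le> p m"
    and pos: "\<And>n. n \<in> {1..N} \<Longrightarrow> p n > 0"
    and i: "i \<in> {1..N}"
    and priv_i: "2 * \<kappa> * p i / sqrt \<sigma>B \<le> \<epsilon>"
    and largest: "\<And>n. n \<in> {1..N} \<Longrightarrow> 2 * \<kappa> * p n / sqrt \<sigma>B \<le> \<epsilon> \<Longrightarrow> p n \<le> p i"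
    and first: "\<And>n. n \<in> {1..<i} \<Longrightarrow> \<not> (2 * \<kappa> * p n / sqrt \<sigma>B \<le> \<epsilon>)"
  shows "(\<forall>x\<in>{1..N - i + 1}. feasible N p \<kappa> \<epsilon> \<sigma>B \<sigma>E G \<Upsilon> (ax N p \<sigma>E G \<Upsilon> i x)) \<and>
         (\<exists>x\<in>{1..N - i + 1}. optimal N p \<kappa> \<epsilon> \<sigma>B \<sigma>E G \<Upsilon> (ax N p \<sigma>E G \<Upsilon> i x))"
proof -
  let ?A = "{1..N - i + 1}"
  let ?a = "ax N p \<sigma>E G \<Upsilon> i"
  define F where "F s = G * sqrt \<sigma>E / (p s * sqrt \<Upsilon>)" for s
  have sB: "sqrt \<sigma>B > 0" "sqrt \<sigma>E > 0" "sqrt \<Upsilon> > 0" using assms by auto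
  have Fpos: "s \<in> {1..N} \<Longrightarrow> F s > 0" for s using pos[of s] sB \<open>G > 0\<close> unfolding F_def by simp
  have axS: "{n\<in>{1..N}. ?a x n = 1} = {i+x-1..<i+x-1 + nat (Kx N p \<sigma>E G \<Upsilon> i x)}"
    and K0: "0 \<le> Kx N p \<sigma>E G \<Upsilon> i x"
    and KN: "Kx N p \<sigma>E G \<Upsilon> i x \<le> int N - int (i+x-1) + 1"
    and KF: "Kx N p \<sigma>E G \<Upsilon> i x \<le> \<lfloor>F (i+x-1)\<rfloor>"
    and abin: "\<forall>n\<in>{1..N}. ?a x n \<in> {0, 1}"
    if x: "x \<in> ?A" for x
  proof -
    have s: "i + x - 1 \<in> {1..N}" "i \<le> i + x - 1" using x i by auto
    show K0: "0 \<le> Kx N p \<sigma>E G \<Upsilon> i x" unfolding Kx_def F_def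
      using Fpos[OF s(1)] s x unfolding F_def by auto
    show KN: "Kx N p \<sigma>E G \<Upsilon> i x \<le> int N - int (i+x-1) + 1" unfolding Kx_def using s by auto
    show "Kx N p \<sigma>E G \<Upsilon> i x \<le> \<lfloor>F (i+x-1)\<rfloor>" unfolding Kx_def F_def by simp
    show "\<forall>n\<in>{1..N}. ?a x n \<in> {0, 1}" unfolding ax_def by auto
    show "{n\<in>{1..N}. ?a x n = 1} = {i+x-1..<i+x-1 + nat (Kx N p \<sigma>E G \<Upsilon> i x)}"
      using s K0 KN unfolding ax_def by auto
  qed
  have objax: "objective N p (?a x) = sum p {i+x-1..<i+x-1 + nat (Kx N p \<sigma>E G \<Upsilon> i x)}"
    if x: "x \<in> ?A" for x
    using supp_facts(2)[where p=p and N=N, OF abin[OF x] sorted pos axS[OF x, symmetric]] by blast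
  have feas: "feasible N p \<kappa> \<epsilon> \<sigma>B \<sigma>E G \<Upsilon> (?a x)" if x: "x \<in> ?A" for x
  proof -
    define s where "s = i + x - 1"
    define K where "K = Kx N p \<sigma>E G \<Upsilon> i x"
    have s: "s \<in> {1..N}" "i \<le> s" using x i s_def by auto
    have S: "{n\<in>{1..N}. ?a x n = 1} = {s..<s + nat K}" using axS[OF x] s_def K_def by simp
    have priv: "\<forall>n\<in>{1..N}. 2 * \<kappa> * ?a x n * p n / sqrt \<sigma>B \<le> \<epsilon>"
    proof
      fix n assume n: "n \<in> {1..N}"
      show "2 * \<kappa> * ?a x n * p n / sqrt \<sigma>B \<le> \<epsilon>"
      proof (cases "?a x n = 1")
        case True
        then have "n \<in> {s..<s + nat K}" using S n by blast
        then have "p n \<le> p i" using sorted[of i n] n s i by auto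
        then have "2 * \<kappa> * p n / sqrt \<sigma>B \<le> 2 * \<kappa> * p i / sqrt \<sigma>B"
          using sB \<open>\<kappa> > 0\<close> by (simp add: divide_right_mono)
        then show ?thesis using True priv_i by simp
      next
        case False
        then have "?a x n = 0" using abin[OF x] n by auto
        then show ?thesis using \<open>\<epsilon> > 0\<close> by simp
      qed
    qed
    have sec: "let D = (\<Sum>n=1..N. ?a x n) * Max ((\<lambda>n. ?a x n * p n) ` {1..N})
      in D = 0 \<or> G * sqrt \<sigma>E / D \<ge> sqrt \<Upsilon>"
    proof (cases "K = 0")
      case True
      then have "(\<Sum>n=1..N. ?a x n) = 0"
        using supp_facts(1)[where p=p and N=N, OF abin[OF x] sorted pos S[symmetric]] by simp
      then show ?thesis by (simp add: Let_def)
    next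
      case False
      then have K1: "K \<ge> 1" using K0[OF x] K_def by simp
      have ne: "{s..<s + nat K} \<noteq> {}" using K1 by auto
      have mn: "Min {s..<s + nat K} = s" using K1 by (intro Min_eqI) auto
      have sum: "(\<Sum>n=1..N. ?a x n) = real_of_int K"
        using supp_facts(1)[where p=p and N=N, OF abin[OF x] sorted pos S[symmetric]] K1 by simp
      have mx: "Max ((\<lambda>n. ?a x n * p n) ` {1..N}) = p s"
        using supp_facts(3)[where p=p and N=N, OF abin[OF x] sorted pos S[symmetric] ne] mn by simp
      have "real_of_int K \<le> F s" using KF[OF x] K_def s_def by (simp add: le_floor_iff)
      then have "real_of_int K * (p s * sqrt \<Upsilon>) \<le> G * sqrt \<sigma>E"
        unfolding F_def using pos[OF s(1)] sB by (simp add: le_divide_eq)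
      then have "sqrt \<Upsilon> \<le> G * sqrt \<sigma>E / (real_of_int K * p s)"
        using pos[OF s(1)] K1 by (simp add: le_divide_eq mult_ac)
      then show ?thesis using sum mx by (simp add: Let_def)
    qed
    show ?thesis unfolding feasible_def using abin[OF x] priv sec by blast
  qed
  have dom: "\<exists>x\<in>?A. objective N p b \<le> objective N p (?a x)"
    if fb: "feasible N p \<kappa> \<epsilon> \<sigma>B \<sigma>E G \<Upsilon> b" for b
  proof -
    define S where "S = {n\<in>{1..N}. b n = 1}"
    have bbin: "\<forall>n\<in>{1..N}. b n \<in> {0, 1}" using fb unfolding feasible_def by blast
    have bpriv: "\<forall>n\<in>{1..N}. 2 * \<kappa> * b n * p n / sqrt \<sigma>B \<le> \<epsilon>" using fb unfolding feasible_def by blast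
    have bsec: "let D = (\<Sum>n=1..N. b n) * Max ((\<lambda>n. b n * p n) ` {1..N})
      in D = 0 \<or> G * sqrt \<sigma>E / D \<ge> sqrt \<Upsilon>" using fb unfolding feasible_def by blast
    have ob: "objective N p b = sum p S" using supp_facts(2)[where p=p and N=N, OF bbin sorted pos S_def] .
    have finS: "finite S" unfolding S_def by auto
    show ?thesis
    proof (cases "S = {}")
      case True
      have "1 \<in> ?A" using i by auto
      moreover have "0 \<le> objective N p (?a 1)" unfolding objective_def
        using pos by (intro sum_nonneg) (simp add: ax_def less_imp_le)
      ultimately show ?thesis using ob True by auto
    next
      case False
      define m where "m = Min S"
      have mS: "m \<in> S" using Min_in[OF finS False] m_def by simp
      have m: "m \<in> {1..N}" "b m = 1" using mS S_def by auto
      have "m \<ge> i"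
      proof (rule ccontr)
        assume "\<not> m \<ge> i"
        then have "m \<in> {1..<i}" using m by auto
        then show False using first bpriv m by fastforce
      qed
      define x where "x = m - i + 1"
      have x: "x \<in> ?A" "i + x - 1 = m" using \<open>m \<ge> i\<close> m x_def by auto
      have Ssub: "S \<subseteq> {m..N}" using S_def m_def finS by auto
      have sumb: "(\<Sum>n=1..N. b n) = real (card S)" using supp_facts(1)[where p=p and N=N, OF bbin sorted pos S_def] .
      have mxb: "Max ((\<lambda>n. b n * p n) ` {1..N}) = p m"
        using supp_facts(3)[where p=p and N=N, OF bbin sorted pos S_def False] m_def by simp
      have cpos: "card S \<ge> 1" using finS False by (simp add: Suc_le_eq card_gt_0_iff)
      have Dpos: "real (card S) * p m > 0" using cpos pos[OF m(1)] by simp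
      then have "sqrt \<Upsilon> \<le> G * sqrt \<sigma>E / (real (card S) * p m)"
        using bsec sumb mxb by (auto simp add: Let_def)
      then have "sqrt \<Upsilon> * (real (card S) * p m) \<le> G * sqrt \<sigma>E"
        using Dpos by (simp add: le_divide_eq)
      then have "real (card S) \<le> F m"
        unfolding F_def using pos[OF m(1)] sB by (simp add: le_divide_eq mult_ac)
      then have cF: "int (card S) \<le> \<lfloor>F m\<rfloor>" by (simp add: le_floor_iff)
      have "card S \<le> card {m..N}" using Ssub by (intro card_mono) auto
      then have cN: "int (card S) \<le> int N - int m + 1" using m by (simp; arith)
      have cK: "card S \<le> nat (Kx N p \<sigma>E G \<Upsilon> i x)"
        using cF cN x(2) unfolding Kx_def F_def by simp
      have "sum p S \<le> sum p {m..<m + card S}"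
        using sum_le_prefix[of m N p S] sorted m finS Ssub by auto
      also have "\<dots> \<le> sum p {m..<m + nat (Kx N p \<sigma>E G \<Upsilon> i x)}"
      proof (rule sum_mono2)
        show "{m..<m + card S} \<subseteq> {m..<m + nat (Kx N p \<sigma>E G \<Upsilon> i x)}" using cK by auto
        fix n assume "n \<in> {m..<m + nat (Kx N p \<sigma>E G \<Upsilon> i x)} - {m..<m + card S}"
        moreover have "m + nat (Kx N p \<sigma>E G \<Upsilon> i x) \<le> N + 1"
          using KN[OF x(1)] K0[OF x(1)] x(2) by linarith
        ultimately have "n \<in> {1..N}" using m by auto
        then show "0 \<le> p n" using pos less_imp_le by blast
      qed simp
      also have "\<dots> = objective N p (?a x)" using objax[OF x(1)] x(2) by simp
      finally show ?thesis using ob x(1) by auto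
    qed
  qed
  define f where "f x = objective N p (?a x)" for x
  have Ane: "?A \<noteq> {}" using i by auto
  have "Max (f ` ?A) \<in> f ` ?A" using Ane by (intro Max_in) auto
  then obtain x0 where x0: "x0 \<in> ?A" "f x0 = Max (f ` ?A)" by (metis imageE)
  have best: "f x \<le> f x0" if "x \<in> ?A" for x using x0 that by simp
  have "optimal N p \<kappa> \<epsilon> \<sigma>B \<sigma>E G \<Upsilon> (?a x0)"
    unfolding optimal_def
  proof (intro conjI allI impI)
    show "feasible N p \<kappa> \<epsilon> \<sigma>B \<sigma>E G \<Upsilon> (?a x0)" using feas x0 by blast
    fix b assume "feasible N p \<kappa> \<epsilon> \<sigma>B \<sigma>E G \<Upsilon> b"
    then obtain x where "x \<in> ?A" "objective N p b \<le> objective N p (?a x)" using dom by blast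
    then show "objective N p b \<le> objective N p (?a x0)" using best[of x] f_def by fastforce
  qed
  then show ?thesis using feas x0 by blast
qed

end
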